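(* Let $p$ be a prime and let $\mathrm{E}_p(X)=\sum_{n=0}^{\infty} a_n X^n\in\mathbb{F}_p[[X]]$ be the reduction modulo $p$ of the Artin-Hasse exponential series. Define $c_{jp}=a_{jp}$ for $0\le j<p-1$ and $c_{(p-1)p}=a_{(p-1)p}+1$. Then for all integers $0\le k<p$ and $0\le r<p$ we have, in $\mathbb{F}_p$, \[ a_{rp+k}=(-1)^{k+1}\sum_{j=0}^{r}{p-k \brack j+1}\,c_{(r-j)p}. \]
   Context: The Artin-Hasse exponential series is $\mathrm{AH}(X)=\exp\bigl(\sum_{i=0}^{\infty}X^{p^i}/p^i\bigr)\in\mathbb{Q}[[X]]$; its coefficients are $p$-integral, so it can be reduced modulo $p$, giving $\mathrm{E}_p(X)\in\mathbb{F}_p[[X]]$. The unsigned Stirling numbers of the first kind ${n \brack i}$ ($0\le i\le n$) are defined by $y(y+1)\cdots(y+n-1)=\sum_{i=0}^{n}{n \brack i}y^i$ in $\mathbb{Z}[y]$, with ${n\brack i}=0$ for $i>n$; they are read modulo $p$ in the formula. *)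

theory Defs
  imports "HOL-Computational_Algebra.Computational_Algebra" "HOL-Combinatorics.Stirling"
begin

definition AH_log :: "nat \<Rightarrow> rat fps" where
  "AH_log p = Abs_fps (\<lambda>n. if (\<exists>i. n = p ^ i) then 1 / of_nat n else 0)"

definition artin_hasse :: "nat \<Rightarrow> rat fps" where
  "artin_hasse p = fps_compose (fps_exp 1) (AH_log p)"

text \<open>Coefficient a_n (as a rational number; it is p-integral, and its reduction mod p
  is the n-th coefficient of E_p).\<close>
definition AH_coeff :: "nat \<Rightarrow> nat \<Rightarrow> rat" where
  "AH_coeff p n = fps_nth (artin_hasse p) n"

definition AH_c :: "nat \<Rightarrow> nat \<Rightarrow> rat" where
  "AH_c p j = AH_coeff p (j * p) + (if j = p - 1 then 1 else 0)"

text \<open>Congruence modulo p of rationals in Z_(p): x - y lies in p Z_(p).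
  For p-integral x, y this is exactly equality of their reductions in F_p.\<close>
definition rat_cong_p :: "nat \<Rightarrow> rat \<Rightarrow> rat \<Rightarrow> bool" where
  "rat_cong_p p x y \<longleftrightarrow>
     (\<exists>a b::int. b \<noteq> 0 \<and> \<not> (int p dvd b) \<and> x - y = of_int (int p * a) / of_int b)"

end

theory Submission
  imports Defs "HOL-Number_Theory.Number_Theory"
begin


definition intp :: "nat \<Rightarrow> rat \<Rightarrow> bool" where
  "intp p x \<longleftrightarrow> (\<exists>a b::int. b \<noteq> 0 \<and> \<not> (int p dvd b) \<and> x = of_int a / of_int b)"

definition pm :: "nat \<Rightarrow> rat \<Rightarrow> bool" where
  "pm p x \<longleftrightarrow> (\<exists>a b::int. b \<noteq> 0 \<and> \<not> (int p dvd b) \<and> x = of_int (int p * a) / of_int b)"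

lemma ndvd_mult: "prime p \<Longrightarrow> \<not> int p dvd b \<Longrightarrow> \<not> int p dvd b' \<Longrightarrow> \<not> int p dvd (b * b')"
  by (metis prime_dvd_mult_iff prime_nat_int_transfer)

lemma intp_add: assumes "prime p" "intp p x" "intp p y" shows "intp p (x + y)"
proof -
  obtain a b a' b' where h: "b \<noteq> 0" "\<not> int p dvd b" "x = of_int a / of_int b"
     "b' \<noteq> 0" "\<not> int p dvd b'" "y = of_int a' / of_int b'" using assms unfolding intp_def by metis
  have "x + y = of_int (a*b' + a'*b) / of_int (b*b')" using h(1,4) by (simp add: h(3) h(6) field_simps)
  then show ?thesis unfolding intp_def using h ndvd_mult[OF assms(1) h(2) h(5)] by (metis mult_eq_0_iff)
qed

lemma intp_mult: assumes "prime p" "intp p x" "intp p y" shows "intp p (x * y)"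
proof -
  obtain a b a' b' where h: "b \<noteq> 0" "\<not> int p dvd b" "x = of_int a / of_int b"
     "b' \<noteq> 0" "\<not> int p dvd b'" "y = of_int a' / of_int b'" using assms unfolding intp_def by metis
  have "x * y = of_int (a*a') / of_int (b*b')" using h(1,4) by (simp add: h(3) h(6) field_simps)
  then show ?thesis unfolding intp_def using h ndvd_mult[OF assms(1) h(2) h(5)] by (metis mult_eq_0_iff)
qed

lemma intp_of_int: "prime p \<Longrightarrow> intp p (of_int a)"
  unfolding intp_def by (rule exI[of _ a], rule exI[of _ 1]) (auto simp: prime_gt_1_nat)

lemma intp_uminus: "intp p x \<Longrightarrow> intp p (- x)"
  unfolding intp_def by (metis minus_divide_left of_int_minus)

lemma intp_diff: "prime p \<Longrightarrow> intp p x \<Longrightarrow> intp p y \<Longrightarrow> intp p (x - y)"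
  using intp_add[of p x "-y"] intp_uminus by simp

lemma pm_add: assumes "prime p" "pm p x" "pm p y" shows "pm p (x + y)"
proof -
  obtain a b a' b' where h: "b \<noteq> 0" "\<not> int p dvd b" "x = of_int (int p * a) / of_int b"
     "b' \<noteq> 0" "\<not> int p dvd b'" "y = of_int (int p * a') / of_int b'" using assms unfolding pm_def by metis
  have "x + y = of_int (int p * (a*b' + a'*b)) / of_int (b*b')" using h(1,4) by (simp add: h(3) h(6) field_simps)
  then show ?thesis unfolding pm_def using h ndvd_mult[OF assms(1) h(2) h(5)] by (metis mult_eq_0_iff)
qed

lemma pm_mult: assumes "prime p" "intp p x" "pm p y" shows "pm p (x * y)"
proof -
  obtain a b a' b' where h: "b \<noteq> 0" "\<not> int p dvd b" "x = of_int a / of_int b"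
     "b' \<noteq> 0" "\<not> int p dvd b'" "y = of_int (int p * a') / of_int b'" using assms unfolding intp_def pm_def by metis
  have "x * y = of_int (int p * (a*a')) / of_int (b*b')" using h(1,4) by (simp add: h(3) h(6) field_simps)
  then show ?thesis unfolding pm_def using h ndvd_mult[OF assms(1) h(2) h(5)] by (metis mult_eq_0_iff)
qed

lemma pm_uminus: "pm p x \<Longrightarrow> pm p (- x)"
  unfolding pm_def by (metis minus_divide_left of_int_minus mult_minus_right)

lemma pm_diff: "prime p \<Longrightarrow> pm p x \<Longrightarrow> pm p y \<Longrightarrow> pm p (x - y)"
  using pm_add[of p x "-y"] pm_uminus by simp

lemma pm_intp: "pm p x \<Longrightarrow> intp p x"
  unfolding pm_def intp_def by blast

lemma pm_of_int: "prime p \<Longrightarrow> int p dvd u \<Longrightarrow> pm p (of_int u)"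
  unfolding pm_def by (elim dvdE, rule exI, rule exI[of _ 1]) (auto simp: prime_gt_1_nat)

lemma pm_zero: "prime p \<Longrightarrow> pm p 0"
  using pm_of_int[of p 0] by simp

lemma pm_div: assumes "prime p" "pm p x" "m \<noteq> 0" "\<not> int p dvd m" shows "pm p (x / of_int m)"
proof -
  obtain a b where h: "b \<noteq> 0" "\<not> int p dvd b" "x = of_int (int p * a) / of_int b"
    using assms unfolding pm_def by metis
  have "x / of_int m = of_int (int p * a) / of_int (b*m)" using h(1) assms(3) by (simp add: h(3) field_simps)
  then show ?thesis unfolding pm_def using h ndvd_mult[OF assms(1) h(2) assms(4)] assms(3) by (metis mult_eq_0_iff)
qed

lemma pm_div_p: assumes "prime p" "pm p x" "m \<noteq> 0" "\<not> int p dvd m" shows "intp p (x / (of_int (int p * m)))"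
proof -
  obtain a b where h: "b \<noteq> 0" "\<not> int p dvd b" "x = of_int (int p * a) / of_int b"
    using assms unfolding pm_def by metis
  have "p \<noteq> 0" using assms(1) by auto
  then have "x / of_int (int p * m) = of_int a / of_int (b*m)" using h(1) assms(3) by (simp add: h(3) field_simps)
  then show ?thesis unfolding intp_def using h ndvd_mult[OF assms(1) h(2) assms(4)] assms(3) by (metis mult_eq_0_iff)
qed

lemma pm_sum: "prime p \<Longrightarrow> (\<And>i. i \<in> A \<Longrightarrow> pm p (f i)) \<Longrightarrow> pm p (sum f A)"
  by (induction A rule: infinite_finite_induct) (auto simp: pm_zero pm_add)

lemma intp_sum: "prime p \<Longrightarrow> (\<And>i. i \<in> A \<Longrightarrow> intp p (f i)) \<Longrightarrow> intp p (sum f A)"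
  by (induction A rule: infinite_finite_induct) (auto simp: intp_add intp_of_int[of p 0, simplified])



lemma lagrange_modp:
  fixes Q :: "int poly"
  assumes p: "prime p" and "finite S"
    and inc: "\<forall>a\<in>S. \<forall>b\<in>S. a \<noteq> b \<longrightarrow> \<not> int p dvd (b - a)"
    and roots: "\<forall>a\<in>S. int p dvd poly Q a" and deg: "degree Q < card S"
  shows "int p dvd Polynomial.coeff Q i"
  using assms(2-5)
proof (induction S arbitrary: Q i rule: finite_induct)
  case empty
  then show ?case by simp
next
  case (insert a S)
  show ?case
  proof (cases "degree Q = 0")
    case True
    then obtain c where Qc: "Q = [:c:]" by (metis degree_eq_zeroE)
    have "int p dvd poly Q a" using insert.prems(2) by simp
    with Qc have "int p dvd c" by simp
    then show ?thesis using Qc by (cases i) auto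
  next
    case False
    define Q1 where "Q1 = synthetic_div Q a"
    have decomp: "Q = [:-a, 1:] * Q1 + [:poly Q a:]" unfolding Q1_def by (rule synthetic_div_correct'[symmetric])
    have dQ1: "degree Q1 < card S" using False insert.prems(3) insert.hyps
      unfolding Q1_def degree_synthetic_div by auto
    have "int p dvd poly Q1 b" if b: "b \<in> S" for b
    proof -
      have "poly Q b = (b - a) * poly Q1 b + poly Q a"
        by (subst decomp) (simp add: algebra_simps)
      then have "poly Q1 b * (b - a) = poly Q b - poly Q a" by (simp add: algebra_simps)
      moreover have "int p dvd poly Q b - poly Q a" using insert.prems(2) b by auto
      ultimately have "int p dvd poly Q1 b * (b - a)" by simp
      moreover have "\<not> int p dvd (b - a)" using insert.prems(1) b insert.hyps(2) by auto
      moreover have "prime (int p)" using p by simp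
      ultimately show ?thesis using prime_dvd_mult_iff by blast
    qed
    then have IH: "\<And>j. int p dvd Polynomial.coeff Q1 j"
      using insert.IH[of Q1] insert.prems(1) dQ1 by auto
    have pa: "int p dvd poly Q a" using insert.prems(2) by auto
    have "Polynomial.coeff Q i = - a * Polynomial.coeff Q1 i + Polynomial.coeff (pCons 0 Q1) i + (if i = 0 then poly Q a else 0)"
      by (subst decomp) (simp add: coeff_pCons split: nat.split)
    moreover have "int p dvd Polynomial.coeff (pCons 0 Q1) i" using IH by (cases i) auto
    ultimately show ?thesis using IH pa
      by (simp add: dvd_add)
  qed
qed

lemma fermat_int_nat: assumes "prime p" shows "int p dvd int a ^ p - int a"
proof (cases "p dvd a")
  case True
  obtain m where pm: "p = Suc m" using assms by (cases p) auto
  have "int p dvd int a" using True by simp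
  then have "int p dvd int a * int a ^ m" by (rule dvd_mult2)
  then have "int p dvd int a ^ p" by (simp add: pm)
  then show ?thesis using \<open>int p dvd int a\<close> by (rule dvd_diff)
next
  case False
  obtain m where pm: "p = Suc m" using assms by (cases p) auto
  have "[a ^ (p - 1) = 1] (mod p)" using fermat_theorem[OF assms False] .
  then have "[a ^ (p - 1) * a = 1 * a] (mod p)" by (rule cong_mult) (rule cong_refl)
  moreover have "a ^ (p - 1) * a = a ^ p" by (simp add: pm)
  ultimately have "[a ^ p = a] (mod p)" by simp
  then have "[int a ^ p = int a] (mod int p)"
    using cong_int_iff[of "a^p" a p] by simp
  then show ?thesis by (simp add: cong_iff_dvd_diff)
qed

lemma pochhammer_dvd: assumes "prime p" "a < p" shows "int p dvd pochhammer (int a) p"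
proof (cases "a = 0")
  case True
  then show ?thesis using assms by (simp add: pochhammer_0_left prime_gt_0_nat)
next
  case False
  have "p - a \<in> {0..<p}" using False assms by auto
  moreover have "int a + of_nat (p - a) = int p" using assms by simp
  ultimately have "int p dvd prod (\<lambda>i. int a + of_nat i) {0..<p}"
    by (metis dvd_prodI dvd_refl finite_atLeastLessThan)
  then show ?thesis by (simp add: pochhammer_prod)
qed

lemma stirling_modp:
  assumes p: "prime p" and k: "k < p"
  shows "int p dvd int (stirling p k) + (if k = 1 then 1 else 0)"
proof -
  define c where "c k = int (stirling p k) + (if k = 1 then 1 else 0)" for k
  define Q where "Q = (\<Sum>k<p. Polynomial.monom (c k) k)"
  have p2: "p \<ge> 2" using p prime_ge_2_nat by blast
  have cQ: "Polynomial.coeff Q i = (if i < p then c i else 0)" for i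
    unfolding Q_def coeff_sum coeff_monom by (auto simp: sum.delta)
  have dQ: "degree Q < p"
  proof -
    have "degree Q \<le> p - 1" by (rule degree_le) (use cQ p2 in auto)
    then show ?thesis using p2 by linarith
  qed
  have polyQ: "poly Q x = pochhammer x p - x ^ p + x" for x :: int
  proof -
    have "poly Q x = (\<Sum>k<p. c k * x ^ k)" unfolding Q_def by (simp add: poly_sum poly_monom)
    also have "\<dots> = (\<Sum>k<p. int (stirling p k) * x ^ k + (if k = 1 then x else 0))"
      unfolding c_def by (rule sum.cong) (auto simp: algebra_simps)
    also have "\<dots> = (\<Sum>k<p. int (stirling p k) * x ^ k) + (\<Sum>k<p. (if k = 1 then x else 0))"
      by (rule sum.distrib)
    also have "(\<Sum>k<p. (if k = 1 then x else 0)) = x" using p2 by (simp add: sum.delta)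
    also have "(\<Sum>k<p. int (stirling p k) * x ^ k) = pochhammer x p - x ^ p"
      using stirling_pochhammer[of p x] by (simp add: lessThan_Suc_atMost[symmetric])
    finally show ?thesis by simp
  qed
  have "int p dvd Polynomial.coeff Q k"
  proof (rule lagrange_modp[OF p, of "int ` {..<p}"])
    show "\<forall>a\<in>int ` {..<p}. \<forall>b\<in>int ` {..<p}. a \<noteq> b \<longrightarrow> \<not> int p dvd b - a"
    proof (intro ballI impI)
      fix a b assume "a \<in> int ` {..<p}" "b \<in> int ` {..<p}" "a \<noteq> b"
      then have "\<bar>b - a\<bar> < int p" "b - a \<noteq> 0" by auto
      then show "\<not> int p dvd b - a" using dvd_imp_le_int[of "b - a" "int p"] by linarith
    qed
    show "\<forall>a\<in>int ` {..<p}. int p dvd poly Q a"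
    proof
      fix a assume "a \<in> int ` {..<p}"
      then obtain i where i: "i < p" "a = int i" by auto
      have "int p dvd pochhammer a p" using pochhammer_dvd[OF p i(1)] i(2) by simp
      moreover have "int p dvd a ^ p - a" using fermat_int_nat[OF p, of i] i(2) by simp
      ultimately have "int p dvd pochhammer a p - (a ^ p - a)" by (rule dvd_diff)
      moreover have "poly Q a = pochhammer a p - (a ^ p - a)" by (simp add: polyQ)
      ultimately show "int p dvd poly Q a" by simp
    qed
    show "degree Q < card (int ` {..<p})" using dQ by (simp add: card_image)
  qed simp
  then show ?thesis using cQ k c_def by simp
qed



lemma AH_coeff_0: assumes "prime p" shows "AH_coeff p 0 = 1"
proof -
  have "fps_nth (AH_log p) 0 = 0" using assms unfolding AH_log_def by (auto simp: prime_gt_0_nat)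
  then show ?thesis unfolding AH_coeff_def artin_hasse_def by simp
qed

lemma pow_char: fixes p m :: nat assumes p: "prime p" and m: "m + 1 < p * p"
  shows "(\<exists>i. m + 1 = p ^ i) \<longleftrightarrow> (m = 0 \<or> m + 1 = p)"
proof
  assume "\<exists>i. m + 1 = p ^ i"
  then obtain i where i: "m + 1 = p ^ i" by blast
  have p2: "p \<ge> 2" using p prime_ge_2_nat by blast
  show "m = 0 \<or> m + 1 = p"
  proof (cases i)
    case 0 then show ?thesis using i by simp
  next
    case (Suc j)
    show ?thesis
    proof (cases j)
      case 0 then show ?thesis using i Suc by simp
    next
      case (Suc l)
      have "p * p \<le> p * p * p ^ l" using p2 by simp
      then have "p * p \<le> p ^ i" using \<open>i = Suc j\<close> Suc by (simp add: algebra_simps)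
      then show ?thesis using i m by simp
    qed
  qed
next
  assume "m = 0 \<or> m + 1 = p"
  then show "\<exists>i. m + 1 = p ^ i" by (metis One_nat_def add_0 power_0 power_one_right)
qed

lemma AH_rec:
  assumes p: "prime p" and n: "n + 1 < p * p"
  shows "of_nat (n + 1) * AH_coeff p (n + 1) =
           AH_coeff p n + (if p \<le> n + 1 then AH_coeff p (n + 1 - p) else 0)"
proof -
  define L where "L = AH_log p"
  define A where "A = artin_hasse p"
  have p2: "p \<ge> 2" using p prime_ge_2_nat by blast
  have L0: "L $ 0 = 0" using p unfolding L_def AH_log_def by (auto simp: prime_gt_0_nat)
  have der: "fps_deriv A = A * fps_deriv L"
    unfolding A_def artin_hasse_def L_def[symmetric] fps_compose_deriv[OF L0] by simp
  have dL: "fps_deriv L $ m = (if m = 0 \<or> m + 1 = p then 1 else 0)" if "m \<le> n" for m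
  proof -
    have "m + 1 < p * p" using that n by simp
    then have "fps_deriv L $ m = (if \<exists>i. m + 1 = p ^ i then 1 else 0)"
      unfolding L_def AH_log_def by simp
    then show ?thesis using pow_char[OF p \<open>m + 1 < p * p\<close>] by simp
  qed
  have "of_nat (n + 1) * A $ (n + 1) = (A * fps_deriv L) $ n"
    by (simp flip: der)
  also have "\<dots> = (\<Sum>i=0..n. A $ i * fps_deriv L $ (n - i))" by (rule fps_mult_nth)
  also have "\<dots> = (\<Sum>i=0..n. (if i = n then A $ i else 0) + (if i + p = n + 1 then A $ i else 0))"
  proof (rule sum.cong)
    fix i assume "i \<in> {0..n}"
    then have i: "i \<le> n" by simp
    have "n - i \<le> n" by simp
    then show "A $ i * fps_deriv L $ (n - i) = (if i = n then A $ i else 0) + (if i + p = n + 1 then A $ i else 0)"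
      using dL[of "n - i"] i p2 by auto
  qed simp
  also have "\<dots> = A $ n + (if p \<le> n + 1 then A $ (n + 1 - p) else 0)"
  proof -
    have "(\<Sum>i=0..n. (if i + p = n + 1 then A $ i else 0)) = (\<Sum>i=0..n. (if i = n + 1 - p \<and> p \<le> n + 1 then A $ i else 0))"
      by (rule sum.cong) auto
    also have "\<dots> = (if p \<le> n + 1 then A $ (n + 1 - p) else 0)"
      using p2 by (auto simp: sum.delta)
    finally show ?thesis by (simp add: sum.distrib)
  qed
  finally show ?thesis unfolding A_def AH_coeff_def .
qed



definition FF :: "nat \<Rightarrow> (nat \<Rightarrow> rat) \<Rightarrow> nat \<Rightarrow> nat \<Rightarrow> rat" where
  "FF p c r k = (-1) ^ (k + 1) * (\<Sum>j\<le>r. of_nat (stirling (p - k) (j + 1)) * c (r - j))"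

lemma stir_shift:
  fixes c :: "nat \<Rightarrow> rat" assumes "m \<ge> 1"
  shows "(\<Sum>j\<le>r. of_nat (stirling (Suc m) (j+1)) * c (r-j)) =
     of_nat m * (\<Sum>j\<le>r. of_nat (stirling m (j+1)) * c (r-j)) +
     (if r = 0 then 0 else (\<Sum>j\<le>r-1. of_nat (stirling m (j+1)) * c (r-1-j)))"
proof -
  have "(\<Sum>j\<le>r. of_nat (stirling (Suc m) (j+1)) * c (r-j)) =
     (\<Sum>j\<le>r. of_nat m * (of_nat (stirling m (j+1)) * c (r-j)) + of_nat (stirling m j) * c (r-j))"
    by (rule sum.cong) (simp_all add: algebra_simps)
  also have "\<dots> = of_nat m * (\<Sum>j\<le>r. of_nat (stirling m (j+1)) * c (r-j)) +
      (\<Sum>j\<le>r. of_nat (stirling m j) * c (r-j))"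
    by (simp add: sum.distrib sum_distrib_left)
  also have "(\<Sum>j\<le>r. of_nat (stirling m j) * c (r-j)) =
      (if r = 0 then 0 else (\<Sum>j\<le>r-1. of_nat (stirling m (j+1)) * c (r-1-j)))"
  proof (cases r)
    case 0 then show ?thesis using assms by simp
  next
    case (Suc r') then show ?thesis using assms by (simp only: sum.atMost_Suc_shift) simp
  qed
  finally show ?thesis .
qed

lemma FF_step:
  fixes c :: "nat \<Rightarrow> rat" assumes "Suc k < p"
  shows "FF p c r k + (if r = 0 then 0 else FF p c (r - 1) (Suc k)) =
           (of_nat (Suc k) - of_nat p) * FF p c r (Suc k)"
proof -
  define m where "m = p - Suc k"
  have m1: "m \<ge> 1" and pk: "p - k = Suc m" and neg: "of_nat (Suc k) - of_nat p = - (of_nat m :: rat)"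
    using assms unfolding m_def by (auto simp: of_nat_diff)
  define T where "T r = (\<Sum>j\<le>r. of_nat (stirling m (j+1)) * c (r-j))" for r
  have FFk: "FF p c r k = (-1) ^ (k + 1) * (of_nat m * T r + (if r = 0 then 0 else T (r - 1)))"
    unfolding FF_def pk stir_shift[OF m1] T_def ..
  have FFs: "FF p c r' (Suc k) = (-1) ^ (k + 2) * T r'" for r'
    unfolding FF_def T_def m_def by simp
  show ?thesis unfolding FFk FFs neg by (simp add: algebra_simps)
qed



lemma divmod_aux: fixes q p s :: nat assumes "s < p" shows "(q * p + s) div p = q" "(q * p + s) mod p = s"
  using assms by auto

lemma intp_FF: assumes "prime p" "\<And>i. i \<le> r \<Longrightarrow> intp p (c i)" shows "intp p (FF p c r k)"
proof -
  have "intp p ((-1) ^ (k + 1))" using intp_of_int[OF assms(1), of "(-1) ^ (k+1)"] by simp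
  moreover have "intp p (\<Sum>j\<le>r. of_nat (stirling (p - k) (j + 1)) * c (r - j))"
  proof (rule intp_sum[OF assms(1)])
    fix j assume "j \<in> {..r}"
    then show "intp p (of_nat (stirling (p - k) (j + 1)) * c (r - j))"
      using intp_mult[OF assms(1) intp_of_int[OF assms(1), of "int (stirling (p - k) (j + 1))"] assms(2)[of "r - j"]]
      by simp
  qed
  ultimately show ?thesis unfolding FF_def by (rule intp_mult[OF assms(1)])
qed

lemma stirling_1_Suc: "stirling 1 (Suc j) = (if j = 0 then 1 else 0)"
  by (cases j) simp_all

lemma sum_stirling1: "(\<Sum>j\<le>q. of_nat (stirling 1 (j+1)) * f j) = (f 0 :: rat)"
proof -
  have "(\<Sum>j\<le>q. of_nat (stirling 1 (j+1)) * f j) = (\<Sum>j\<le>q. if j = 0 then f j else 0)"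
    by (rule sum.cong) (auto simp: stirling_1_Suc)
  also have "\<dots> = f 0" by (simp add: sum.delta)
  finally show ?thesis .
qed

lemma main_ind:
  assumes p: "prime p"
  shows "n < p * p \<Longrightarrow> intp p (AH_coeff p n) \<and> pm p (AH_coeff p n - FF p (AH_c p) (n div p) (n mod p))"
proof (induction n rule: less_induct)
  case (less n)
  define a where "a = AH_coeff p"
  define c where "c = AH_c p"
  define r where "r = n div p"
  define k where "k = n mod p"
  have p2: "p \<ge> 2" using p prime_ge_2_nat by blast
  have p0: "p > 0" using p2 by simp
  have rp: "r < p" unfolding r_def using less.prems by (simp add: less_mult_imp_div_less)
  have nrk: "n = r * p + k" unfolding r_def k_def by simp
  have kp: "k < p" unfolding k_def using p0 by simp
  have IH: "\<And>m. m < n \<Longrightarrow> intp p (a m) \<and> pm p (a m - FF p c (m div p) (m mod p))"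
    using less.IH less.prems unfolding a_def c_def by fastforce
  have a0: "a 0 = 1" unfolding a_def using AH_coeff_0[OF p] .
  have c_eq: "c i = a (i * p) + (if i = p - 1 then 1 else 0)" for i
    unfolding c_def a_def AH_c_def ..
  have cint: "intp p (c i)" if "i * p < n" for i
  proof -
    have "intp p (a (i * p))" using IH that by blast
    moreover have "intp p (if i = p - 1 then 1 else 0)"
      using intp_of_int[OF p, of 1] intp_of_int[OF p, of 0] by simp
    ultimately show ?thesis unfolding c_eq by (rule intp_add[OF p])
  qed
  have fin: "intp p (a n) \<and> pm p (a n - FF p c r k)"
  proof (cases k)
    case 0
    have nrp: "n = r * p" using nrk 0 by simp
    have ia: "intp p (a n)"
    proof (cases "r = 0")
      case True
      then show ?thesis using nrp a0 intp_of_int[OF p, of 1] by simp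
    next
      case False
      have n1: "n - 1 = (r - 1) * p + (p - 1)" using nrp False p0
        by (cases r) (auto simp: algebra_simps)
      have np: "n - p = (r - 1) * p" using nrp False by (cases r) auto
      have pn: "p \<le> n" using nrp False by simp
      have n11: "n - 1 + 1 = n" using pn p0 by simp
      have rec: "of_nat n * a n = a (n - 1) + a (n - p)"
        using AH_rec[OF p, of "n - 1"] less.prems pn unfolding a_def n11 by simp
      have "(n - 1) div p = r - 1" "(n - 1) mod p = p - 1"
        unfolding n1 using divmod_aux[of "p - 1" p "r - 1"] p0 by auto
      then have IH1: "pm p (a (n - 1) - FF p c (r - 1) (p - 1))"
        using IH[of "n - 1"] pn p0 by auto
      have FFv: "FF p c (r - 1) (p - 1) = (-1) ^ p * c (r - 1)"
      proof -
        have "p - (p - 1) = 1" "p - 1 + 1 = p" using p0 by auto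
        then show ?thesis unfolding FF_def using sum_stirling1[where q="r - 1" and f="\<lambda>j. c (r - 1 - j)"] by simp
      qed
      have cr1: "c (r - 1) = a (n - p)" unfolding c_eq np using rp False by auto
      have ian: "intp p (a (n - p))" using IH[of "n - p"] pn p0 by auto
      have pm1: "pm p (a (n - 1) - (-1) ^ p * a (n - p))" using IH1 FFv cr1 by simp
      have dv: "int p dvd 1 + (-1) ^ p"
      proof (cases "even p")
        case True
        then have "p = 2" using prime_odd_nat[OF p] p2 by fastforce
        then show ?thesis by simp
      next
        case False
        then show ?thesis by simp
      qed
      have pm2: "pm p (a (n - p) * of_int (1 + (-1) ^ p))"
        by (rule pm_mult[OF p ian pm_of_int[OF p dv]])
      have eqS: "a (n - 1) + a (n - p) = (a (n - 1) - (-1) ^ p * a (n - p)) + a (n - p) * of_int (1 + (-1) ^ p)"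
        by (simp add: algebra_simps)
      have pmS: "pm p (a (n - 1) + a (n - p))" unfolding eqS by (rule pm_add[OF p pm1 pm2])
      have ndvd: "\<not> int p dvd int r" using False rp by (auto dest: dvd_imp_le)
      have "intp p ((a (n - 1) + a (n - p)) / of_int (int p * int r))"
        by (rule pm_div_p[OF p pmS]) (use False ndvd in auto)
      moreover have "a n = (a (n - 1) + a (n - p)) / of_int (int p * int r)"
        using rec nrp False p0 by (simp add: field_simps)
      ultimately show ?thesis by simp
    qed
    define e where "e j = int (stirling p (j+1)) + (if j = 0 then 1 else 0) - (if j = p - 1 then 1 else 0)" for j
    have edvd: "int p dvd e j" if "j \<le> r" for j
    proof (cases "j + 1 < p")
      case True
      then have "j \<noteq> p - 1" by auto
      then show ?thesis using stirling_modp[OF p True] unfolding e_def by simp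
    next
      case False
      then have "j + 1 = p" using that rp by simp
      then show ?thesis unfolding e_def using p2 by auto
    qed
    have sum_eq: "(\<Sum>j\<le>r. of_nat (stirling p (j+1)) * c (r-j)) =
        (\<Sum>j\<le>r. of_int (e j) * c (r-j)) - c r + (if r = p - 1 then c 0 else 0)"
    proof -
      have "(\<Sum>j\<le>r. of_int (e j) * c (r-j)) = (\<Sum>j\<le>r. of_nat (stirling p (j+1)) * c (r-j) +
           ((if j = 0 then c (r - j) else 0) - (if j = p - 1 then c (r - j) else 0)))"
        by (rule sum.cong) (auto simp: e_def algebra_simps)
      also have "\<dots> = (\<Sum>j\<le>r. of_nat (stirling p (j+1)) * c (r-j)) +
           ((\<Sum>j\<le>r. if j = 0 then c (r - j) else 0) - (\<Sum>j\<le>r. if j = p - 1 then c (r - j) else 0))"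
        by (simp add: sum.distrib sum_subtractf)
      also have "(\<Sum>j\<le>r. if j = 0 then c (r - j) else 0) = c r" by (simp add: sum.delta)
      also have "(\<Sum>j\<le>r. if j = p - 1 then c (r - j) else 0) = (if r = p - 1 then c 0 else 0)"
        using rp by (simp add: sum.delta) linarith
      finally show ?thesis by simp
    qed
    have c0: "c 0 = 1" using c_eq[of 0] a0 p2 by simp
    have cr: "c r = a n + (if r = p - 1 then 1 else 0)" using c_eq[of r] nrp by simp
    have FF0: "FF p c r 0 = - (\<Sum>j\<le>r. of_nat (stirling p (j+1)) * c (r-j))"
      unfolding FF_def by simp
    have eqd: "a n - FF p c r 0 = (\<Sum>j\<le>r. of_int (e j) * c (r-j))"
      unfolding FF0 sum_eq cr c0 by simp
    have "pm p (\<Sum>j\<le>r. of_int (e j) * c (r-j))"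
    proof (rule pm_sum[OF p])
      fix j assume j: "j \<in> {..r}"
      have "intp p (c (r - j))"
      proof (cases "j = 0")
        case True
        have "intp p (if r = p - 1 then 1 else 0)"
          using intp_of_int[OF p, of 1] intp_of_int[OF p, of 0] by simp
        then show ?thesis using True cr intp_add[OF p ia] by simp
      next
        case False
        then have "(r - j) * p < n" using nrp j p0 by auto
        then show ?thesis by (rule cint)
      qed
      then have "pm p (c (r - j) * of_int (e j))"
        using pm_mult[OF p _ pm_of_int[OF p edvd]] j by simp
      then show "pm p (of_int (e j) * c (r - j))" by (simp add: mult.commute)
    qed
    then show ?thesis using ia eqd 0 by simp
  next
    case (Suc k')
    have kp': "Suc k' < p" using kp Suc by simp
    have n1: "n - 1 = r * p + k'" using nrk Suc by simp
    have n11: "n - 1 + 1 = n" using nrk Suc by simp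
    have pn_iff: "p \<le> n \<longleftrightarrow> r \<noteq> 0" using nrk kp p0 by (cases r) auto
    have rec: "of_nat n * a n = a (n - 1) + (if r \<noteq> 0 then a (n - p) else 0)"
      using AH_rec[OF p, of "n - 1"] less.prems unfolding a_def n11 pn_iff by simp
    have "(n - 1) div p = r" "(n - 1) mod p = k'"
      unfolding n1 using divmod_aux[of k' p r] kp' by auto
    then have IH1: "pm p (a (n - 1) - FF p c r k')" using IH[of "n - 1"] nrk Suc by auto
    have IH2: "pm p (if r \<noteq> 0 then a (n - p) - FF p c (r - 1) (Suc k') else 0)"
    proof (cases "r = 0")
      case True then show ?thesis using pm_zero[OF p] by simp
    next
      case False
      have np: "n - p = (r - 1) * p + Suc k'" using nrk Suc False by (cases r) auto
      have "(n - p) div p = r - 1" "(n - p) mod p = Suc k'"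
        unfolding np using divmod_aux[of "Suc k'" p "r - 1"] kp' by auto
      then show ?thesis using IH[of "n - p"] False p0 pn_iff by auto
    qed
    define F where "F = FF p c r k"
    have Fint: "intp p F" unfolding F_def
    proof (rule intp_FF[OF p])
      fix i assume "i \<le> r"
      then have "i * p \<le> r * p" by (rule mult_le_mono1)
      then have "i * p < n" using nrk Suc by linarith
      then show "intp p (c i)" by (rule cint)
    qed
    have step: "FF p c r k' + (if r = 0 then 0 else FF p c (r - 1) (Suc k')) =
           (of_nat (Suc k') - of_nat p) * F"
      unfolding F_def Suc by (rule FF_step[OF kp'])
    have "of_nat n * a n - (of_nat (Suc k') - of_nat p) * F =
        (a (n - 1) - FF p c r k') + (if r \<noteq> 0 then a (n - p) - FF p c (r - 1) (Suc k') else 0)"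
      unfolding rec step[symmetric] by (cases "r = 0") (simp_all add: algebra_simps)
    then have pmX: "pm p (of_nat n * a n - (of_nat (Suc k') - of_nat p) * F)"
      using pm_add[OF p IH1 IH2] by simp
    have pmY: "pm p (F * of_int (int p * (int r + 1)))"
      by (rule pm_mult[OF p Fint pm_of_int[OF p]]) simp
    have "of_nat n * (a n - F) = (of_nat n * a n - (of_nat (Suc k') - of_nat p) * F) - F * of_int (int p * (int r + 1))"
    proof -
      have "(of_nat n :: rat) = of_nat r * of_nat p + of_nat (Suc k')" using nrk Suc by simp
      then show ?thesis by (simp add: algebra_simps)
    qed
    then have pmZ: "pm p (of_nat n * (a n - F))" using pm_diff[OF p pmX pmY] by simp
    have nz: "int n \<noteq> 0" using nrk Suc by (simp del: of_nat_add of_nat_mult)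
    have "\<not> p dvd n" using Suc k_def by (simp add: dvd_eq_mod_eq_0)
    then have ndv: "\<not> int p dvd int n" by simp
    have "pm p ((of_nat n * (a n - F)) / of_int (int n))"
      by (rule pm_div[OF p pmZ nz ndv])
    then have pmF: "pm p (a n - F)" using nz by simp
    then have "intp p (a n - F + F)" by (rule intp_add[OF p pm_intp Fint])
    then show ?thesis using pmF unfolding F_def by simp
  qed
  then show ?case unfolding a_def c_def r_def k_def .
qed

theorem proposition1p4:
  fixes p k r :: nat
  assumes "prime p" and "k < p" and "r < p"
  shows "rat_cong_p p (AH_coeff p (r * p + k))
           ((-1) ^ (k + 1) * (\<Sum>j\<le>r. of_nat (stirling (p - k) (j + 1)) * AH_c p (r - j)))"
proof -
  have "r * p + k < r * p + p" using assms by simp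
  also have "\<dots> = (r + 1) * p" by simp
  also have "\<dots> \<le> p * p" using assms by (intro mult_le_mono1) simp
  finally have lt: "r * p + k < p * p" .
  have "(r * p + k) div p = r" "(r * p + k) mod p = k" using divmod_aux[of k p r] assms by auto
  then have "pm p (AH_coeff p (r * p + k) - FF p (AH_c p) r k)"
    using main_ind[OF assms(1) lt] by simp
  then show ?thesis unfolding rat_cong_p_def pm_def FF_def .
qed


end
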